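(* Let $C_{11}(\{1,3\})$ be the circulant graph with vertex set $\mathbb Z_{11}$ in which $i$ and $j$ are adjacent iff $i-j\equiv \pm1$ or $\pm 3 \pmod{11}$, and let $G_{22}$ be the complement of the line graph $L(C_{11}(\{1,3\}))$. Then $G_{22}$ is not co-triangle, i.e., $L(C_{11}(\{1,3\}))$ is not a triangle graph.
   Context: A graph $G$ is triangle if for every maximal stable set $S$ of $G$ and every edge $uv$ of $G$ with $u,v\notin S$, there is $s\in S$ adjacent to both $u$ and $v$. The line graph $L(H)$ has vertex set $E(H)$, with two edges adjacent iff they share an endpoint. *)

theory Defs
  imports Main
begin

text \<open>A simple graph is given by a vertex set V and a symmetric irreflexive
adjacency relation E (only its restriction to V matters).\<close>

definition stable_set :: "'a set \<Rightarrow> ('a \<Rightarrow> 'a \<Rightarrow> bool) \<Rightarrow> 'a set \<Rightarrow> bool" where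
  "stable_set V E S \<longleftrightarrow> S \<subseteq> V \<and> (\<forall>x\<in>S. \<forall>y\<in>S. \<not> E x y)"

definition maximal_stable_set :: "'a set \<Rightarrow> ('a \<Rightarrow> 'a \<Rightarrow> bool) \<Rightarrow> 'a set \<Rightarrow> bool" where
  "maximal_stable_set V E S \<longleftrightarrow> stable_set V E S \<and>
     (\<forall>T. stable_set V E T \<and> S \<subseteq> T \<longrightarrow> T = S)"

definition triangle_graph :: "'a set \<Rightarrow> ('a \<Rightarrow> 'a \<Rightarrow> bool) \<Rightarrow> bool" where
  "triangle_graph V E \<longleftrightarrow>
     (\<forall>S. maximal_stable_set V E S \<longrightarrow>
        (\<forall>u\<in>V. \<forall>v\<in>V. E u v \<and> u \<notin> S \<and> v \<notin> S \<longrightarrow>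
            (\<exists>s\<in>S. E s u \<and> E s v)))"

definition complement_adj :: "('a \<Rightarrow> 'a \<Rightarrow> bool) \<Rightarrow> 'a \<Rightarrow> 'a \<Rightarrow> bool" where
  "complement_adj E x y \<longleftrightarrow> x \<noteq> y \<and> \<not> E x y"

definition co_triangle_graph :: "'a set \<Rightarrow> ('a \<Rightarrow> 'a \<Rightarrow> bool) \<Rightarrow> bool" where
  "co_triangle_graph V E \<longleftrightarrow> triangle_graph V (complement_adj E)"

definition line_vertices :: "'a set \<Rightarrow> ('a \<Rightarrow> 'a \<Rightarrow> bool) \<Rightarrow> 'a set set" where
  "line_vertices V E = {{u, v} | u v. u \<in> V \<and> v \<in> V \<and> E u v}"

definition line_adj :: "'a set \<Rightarrow> 'a set \<Rightarrow> bool" where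
  "line_adj e f \<longleftrightarrow> e \<noteq> f \<and> e \<inter> f \<noteq> {}"

definition C11_V :: "int set" where
  "C11_V = {0..10}"

definition C11_adj :: "int \<Rightarrow> int \<Rightarrow> bool" where
  "C11_adj i j \<longleftrightarrow> (i - j) mod 11 \<in> {1, 3, 8, 10}"

definition G22_V :: "int set set" where
  "G22_V = line_vertices C11_V C11_adj"

definition G22_adj :: "int set \<Rightarrow> int set \<Rightarrow> bool" where
  "G22_adj = complement_adj line_adj"

end

theory Submission
  imports Defs
begin

definition S0 :: "int set set" where
  "S0 = {{1,2},{3,4},{5,6},{7,8},{9,10}}"

lemma cc: "complement_adj (complement_adj line_adj) = line_adj"
  by (auto simp: fun_eq_iff complement_adj_def line_adj_def)

lemma S0_sub: "S0 \<subseteq> line_vertices C11_V C11_adj"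
proof -
  have "\<And>u v. u \<in> C11_V \<Longrightarrow> v \<in> C11_V \<Longrightarrow> C11_adj u v \<Longrightarrow> {u,v} \<in> line_vertices C11_V C11_adj"
    unfolding line_vertices_def by blast
  then show ?thesis unfolding S0_def by (auto simp: C11_V_def C11_adj_def)
qed

lemma S0_stable: "stable_set (line_vertices C11_V C11_adj) line_adj S0"
  unfolding stable_set_def using S0_sub
  by (auto simp: S0_def line_adj_def)

lemma cover: "w \<in> {1..10::int} \<Longrightarrow> \<exists>s\<in>S0. w \<in> s"
proof -
  assume "w \<in> {1..10::int}"
  then have "w = 1 \<or> w = 2 \<or> w = 3 \<or> w = 4 \<or> w = 5 \<or> w = 6 \<or> w = 7 \<or> w = 8 \<or> w = 9 \<or> w = 10" by (simp add: atLeastAtMost_iff) presburger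
  then show ?thesis unfolding S0_def by auto
qed

lemma S0_max: "maximal_stable_set (line_vertices C11_V C11_adj) line_adj S0"
  unfolding maximal_stable_set_def
proof (intro conjI allI impI S0_stable)
  fix T assume a: "stable_set (line_vertices C11_V C11_adj) line_adj T \<and> S0 \<subseteq> T"
  show "T = S0"
  proof (rule ccontr)
    assume "T \<noteq> S0"
    with a obtain t where t: "t \<in> T" "t \<notin> S0" by blast
    with a have "t \<in> line_vertices C11_V C11_adj" unfolding stable_set_def by blast
    then obtain u v where uv: "t = {u,v}" "u \<in> C11_V" "v \<in> C11_V" "C11_adj u v"
      unfolding line_vertices_def by blast
    have "u \<noteq> v" using uv(4) by (auto simp: C11_adj_def)
    have "(u \<in> {1..10} \<or> v \<in> {1..10})" using \<open>u \<noteq> v\<close> uv(2,3) by (auto simp: C11_V_def)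
    then obtain w where w: "w \<in> t" "w \<in> {1..10}"
      using uv(1) by blast
    then obtain s where s: "s \<in> S0" "w \<in> s" using cover by blast
    have "line_adj s t" using s w t unfolding line_adj_def by auto
    moreover have "s \<in> T" using s a by blast
    ultimately show False using a t unfolding stable_set_def by blast
  qed
qed

lemma main: "\<not> triangle_graph (line_vertices C11_V C11_adj) line_adj"
proof
  assume "triangle_graph (line_vertices C11_V C11_adj) line_adj"
  then have H: "\<forall>u\<in>line_vertices C11_V C11_adj. \<forall>v\<in>line_vertices C11_V C11_adj.
      line_adj u v \<and> u \<notin> S0 \<and> v \<notin> S0 \<longrightarrow> (\<exists>s\<in>S0. line_adj s u \<and> line_adj s v)"
    using S0_max unfolding triangle_graph_def by blast
  have "\<And>u v. u \<in> C11_V \<Longrightarrow> v \<in> C11_V \<Longrightarrow> C11_adj u v \<Longrightarrow> {u,v} \<in> line_vertices C11_V C11_adj"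
    unfolding line_vertices_def by blast
  then have m1: "{0,1} \<in> line_vertices C11_V C11_adj" and m2: "{0,10} \<in> line_vertices C11_V C11_adj"
    by (auto simp: C11_V_def C11_adj_def)
  have "line_adj {0::int,1} {0,10}" by (auto simp: line_adj_def doubleton_eq_iff)
  moreover have "{0::int,1} \<notin> S0" "{0::int,10} \<notin> S0" by (auto simp: S0_def doubleton_eq_iff)
  ultimately obtain s where "s \<in> S0" "line_adj s {0,1}" "line_adj s {0,10}"
    using H m1 m2 by blast
  then show False unfolding S0_def line_adj_def by auto
qed

theorem proposition37:
  shows "\<not> co_triangle_graph G22_V G22_adj \<and>
         \<not> triangle_graph (line_vertices C11_V C11_adj) line_adj"
  using main unfolding co_triangle_graph_def G22_V_def G22_adj_def cc by simp

end
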